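(* Let $V$ be a crossed module and $M$ an abelian $\pi_0(V)$-module. A $2$-cochain $z\in C^2(V,M)$ is a $2$-cocycle if and only if: (a) $z(m,h,g)=z_M(m)-z_G(\mu(m),h)+z_G(h,g)$ for all $m\in M_V$, $g,h\in G_V$; (b) $z_G\in Z^2(G_V,M)$ (group $2$-cocycle, $G_V$ acting on $M$ via $G_V\to\pi_0(V)$); (c) $z_M(nm)=z_M(n)+z_M(m)-z_G(\mu(n),\mu(m))$ for all $m,n\in M_V$; (d) $z_M({}^gm)=\bar g\cdot z_M(m)+z_G(\mu({}^gm),g)-z_G(g,\mu(m))$ for all $m\in M_V$, $g\in G_V$.
   Context: Crossed module $V$: group $G_V$, group $M_V$ with left $G_V$-action ${}^gm$, homomorphism $\mu:M_V\to G_V$ with $\mu({}^gm)=g\mu(m)g^{-1}$, ${}^{\mu(n)}m=nmn^{-1}$; $\pi_0(V)=G_V/\mu(M_V)$, $\bar g$ the class of $g$. The cochain complex of $V$ with coefficients in $M$ has $C^2(V,M)=\mathrm{Map}(M_V\times G_V\times G_V,M)$, $C^3(V,M)=\mathrm{Map}(M_V\times M_V\times G_V\times M_V\times G_V\times G_V,M)$, with $(dc)(p,n,k,m,h,g)=c(p,\mu(n)k,\mu(m)h)-c(pn,k,hg)+c(n\,{}^km,kh,g)-\bar k\cdot c(m,h,g)$; $Z^2(V,M)$ is the kernel. For $c\in C^2(V,M)$: module part $c_M(m):=c(m,1,1)$, group part $c_G(h,g):=c(1,h,g)$. Group cochains: $C^2(\Pi,M)=\mathrm{Map}(\Pi^2,M)$,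 $(dc)(r,q,p)=c(r,q)-c(r,qp)+c(rq,p)-r\cdot c(q,p)$. *)

theory Defs
  imports "HOL-Algebra.Algebra"
begin

locale crossed_module = G: group G + M: group Mv
  for G :: "('g, 'c) monoid_scheme" (structure) and Mv :: "('m, 'd) monoid_scheme"
  and act :: "'g \<Rightarrow> 'm \<Rightarrow> 'm" and mu :: "'m \<Rightarrow> 'g" +
  assumes mu_hom: "mu \<in> hom Mv G"
    and act_closed: "\<lbrakk>g \<in> carrier G; m \<in> carrier Mv\<rbrakk> \<Longrightarrow> act g m \<in> carrier Mv"
    and act_one: "m \<in> carrier Mv \<Longrightarrow> act \<one>\<^bsub>G\<^esub> m = m"
    and act_mult: "\<lbrakk>g \<in> carrier G; h \<in> carrier G; m \<in> carrier Mv\<rbrakk> \<Longrightarrow>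
        act (g \<otimes>\<^bsub>G\<^esub> h) m = act g (act h m)"
    and act_hom: "\<lbrakk>g \<in> carrier G; m \<in> carrier Mv; n \<in> carrier Mv\<rbrakk> \<Longrightarrow>
        act g (m \<otimes>\<^bsub>Mv\<^esub> n) = act g m \<otimes>\<^bsub>Mv\<^esub> act g n"
    and peiffer1: "\<lbrakk>g \<in> carrier G; m \<in> carrier Mv\<rbrakk> \<Longrightarrow>
        mu (act g m) = g \<otimes>\<^bsub>G\<^esub> mu m \<otimes>\<^bsub>G\<^esub> inv\<^bsub>G\<^esub> g"
    and peiffer2: "\<lbrakk>n \<in> carrier Mv; m \<in> carrier Mv\<rbrakk> \<Longrightarrow>
        act (mu n) m = n \<otimes>\<^bsub>Mv\<^esub> m \<otimes>\<^bsub>Mv\<^esub> inv\<^bsub>Mv\<^esub> n"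

definition pi0 :: "('g, 'c) monoid_scheme \<Rightarrow> ('m, 'd) monoid_scheme \<Rightarrow> ('m \<Rightarrow> 'g) \<Rightarrow> 'g set monoid" where
  "pi0 G Mv mu = G Mod (mu ` carrier Mv)"

definition cls :: "('g, 'c) monoid_scheme \<Rightarrow> ('m, 'd) monoid_scheme \<Rightarrow> ('m \<Rightarrow> 'g) \<Rightarrow> 'g \<Rightarrow> 'g set" where
  "cls G Mv mu g = (mu ` carrier Mv) #>\<^bsub>G\<^esub> g"

definition pi0_module :: "('g, 'c) monoid_scheme \<Rightarrow> ('m, 'd) monoid_scheme \<Rightarrow> ('m \<Rightarrow> 'g)
    \<Rightarrow> ('g set \<Rightarrow> 'a::ab_group_add \<Rightarrow> 'a) \<Rightarrow> bool" where
  "pi0_module G Mv mu rho \<longleftrightarrow>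
     (\<forall>U \<in> carrier (pi0 G Mv mu). \<forall>a b. rho U (a + b) = rho U a + rho U b) \<and>
     (\<forall>a. rho \<one>\<^bsub>pi0 G Mv mu\<^esub> a = a) \<and>
     (\<forall>U \<in> carrier (pi0 G Mv mu). \<forall>W \<in> carrier (pi0 G Mv mu). \<forall>a.
        rho (U \<otimes>\<^bsub>pi0 G Mv mu\<^esub> W) a = rho U (rho W a))"

text \<open>Differential C^2(V,M) -> C^3(V,M); a 2-cochain is a map M_V x G_V x G_V -> M (curried).\<close>
definition cm_d2 :: "('g, 'c) monoid_scheme \<Rightarrow> ('m, 'd) monoid_scheme \<Rightarrow> ('g \<Rightarrow> 'm \<Rightarrow> 'm)
    \<Rightarrow> ('m \<Rightarrow> 'g) \<Rightarrow> ('g set \<Rightarrow> 'a::ab_group_add \<Rightarrow> 'a) \<Rightarrow> ('m \<Rightarrow> 'g \<Rightarrow> 'g \<Rightarrow> 'a)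
    \<Rightarrow> 'm \<Rightarrow> 'm \<Rightarrow> 'g \<Rightarrow> 'm \<Rightarrow> 'g \<Rightarrow> 'g \<Rightarrow> 'a" where
  "cm_d2 G Mv act mu rho c p n k m h g =
     c p (mu n \<otimes>\<^bsub>G\<^esub> k) (mu m \<otimes>\<^bsub>G\<^esub> h)
   - c (p \<otimes>\<^bsub>Mv\<^esub> n) k (h \<otimes>\<^bsub>G\<^esub> g)
   + c (n \<otimes>\<^bsub>Mv\<^esub> act k m) (k \<otimes>\<^bsub>G\<^esub> h) g
   - rho (cls G Mv mu k) (c m h g)"

definition cm_Z2 :: "('g, 'c) monoid_scheme \<Rightarrow> ('m, 'd) monoid_scheme \<Rightarrow> ('g \<Rightarrow> 'm \<Rightarrow> 'm)
    \<Rightarrow> ('m \<Rightarrow> 'g) \<Rightarrow> ('g set \<Rightarrow> 'a::ab_group_add \<Rightarrow> 'a) \<Rightarrow> ('m \<Rightarrow> 'g \<Rightarrow> 'g \<Rightarrow> 'a) \<Rightarrow> bool" where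
  "cm_Z2 G Mv act mu rho c \<longleftrightarrow>
     (\<forall>p \<in> carrier Mv. \<forall>n \<in> carrier Mv. \<forall>k \<in> carrier G. \<forall>m \<in> carrier Mv.
      \<forall>h \<in> carrier G. \<forall>g \<in> carrier G. cm_d2 G Mv act mu rho c p n k m h g = 0)"

definition cM :: "('g, 'c) monoid_scheme \<Rightarrow> ('m \<Rightarrow> 'g \<Rightarrow> 'g \<Rightarrow> 'a) \<Rightarrow> 'm \<Rightarrow> 'a" where
  "cM G c m = c m \<one>\<^bsub>G\<^esub> \<one>\<^bsub>G\<^esub>"

definition cG :: "('m, 'd) monoid_scheme \<Rightarrow> ('m \<Rightarrow> 'g \<Rightarrow> 'g \<Rightarrow> 'a) \<Rightarrow> 'g \<Rightarrow> 'g \<Rightarrow> 'a" where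
  "cG Mv c h g = c \<one>\<^bsub>Mv\<^esub> h g"

definition grp_d2 :: "('p, 'e) monoid_scheme \<Rightarrow> ('p \<Rightarrow> 'a::ab_group_add \<Rightarrow> 'a) \<Rightarrow> ('p \<Rightarrow> 'p \<Rightarrow> 'a)
    \<Rightarrow> 'p \<Rightarrow> 'p \<Rightarrow> 'p \<Rightarrow> 'a" where
  "grp_d2 P actM c r q p = c r q - c r (q \<otimes>\<^bsub>P\<^esub> p) + c (r \<otimes>\<^bsub>P\<^esub> q) p - actM r (c q p)"

definition grp_Z2 :: "('p, 'e) monoid_scheme \<Rightarrow> ('p \<Rightarrow> 'a::ab_group_add \<Rightarrow> 'a) \<Rightarrow> ('p \<Rightarrow> 'p \<Rightarrow> 'a) \<Rightarrow> bool" where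
  "grp_Z2 P actM c \<longleftrightarrow>
     (\<forall>r \<in> carrier P. \<forall>q \<in> carrier P. \<forall>p \<in> carrier P. grp_d2 P actM c r q p = 0)"

end

theory Submission
  imports Defs
begin

context crossed_module
begin

lemma gh: "group_hom Mv G mu"
  by (simp add: group_hom.intro group_hom_axioms.intro G.group_axioms M.group_axioms mu_hom)

lemma H_sub: "subgroup (mu ` carrier Mv) G"
  using group_hom.img_is_subgroup[OF gh] .

lemma mu_closed[simp]: "m \<in> carrier Mv \<Longrightarrow> mu m \<in> carrier G"
  using mu_hom by (auto simp: hom_def)

lemma mu_mult[simp]: "m \<in> carrier Mv \<Longrightarrow> n \<in> carrier Mv \<Longrightarrow> mu (m \<otimes>\<^bsub>Mv\<^esub> n) = mu m \<otimes> mu n"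
  using mu_hom by (auto simp: hom_def)

lemma mu_one[simp]: "mu \<one>\<^bsub>Mv\<^esub> = \<one>"
  using group_hom.hom_one[OF gh] .

lemma act_one2[simp]: "g \<in> carrier G \<Longrightarrow> act g \<one>\<^bsub>Mv\<^esub> = \<one>\<^bsub>Mv\<^esub>"
proof -
  assume g: "g \<in> carrier G"
  have "act g \<one>\<^bsub>Mv\<^esub> = act g \<one>\<^bsub>Mv\<^esub> \<otimes>\<^bsub>Mv\<^esub> act g \<one>\<^bsub>Mv\<^esub>"
    using act_hom[OF g, of "\<one>\<^bsub>Mv\<^esub>" "\<one>\<^bsub>Mv\<^esub>"] by simp
  then show ?thesis using act_closed[OF g M.one_closed]
    by (metis M.l_cancel_one M.one_closed M.r_one)
qed

lemma cls_carrier: "g \<in> carrier G \<Longrightarrow> cls G Mv mu g \<in> carrier (pi0 G Mv mu)"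
  by (auto simp: cls_def pi0_def FactGroup_def RCOSETS_def)

lemma cls_mu: "m \<in> carrier Mv \<Longrightarrow> cls G Mv mu (mu m) = \<one>\<^bsub>pi0 G Mv mu\<^esub>"
  unfolding cls_def pi0_def FactGroup_def
  using subgroup.rcos_const[OF H_sub G.group_axioms] by auto

lemma cls_one: "cls G Mv mu \<one> = \<one>\<^bsub>pi0 G Mv mu\<^esub>"
  using cls_mu[OF M.one_closed] by simp

lemma main:
  fixes rho :: "'g set \<Rightarrow> 'a::ab_group_add \<Rightarrow> 'a" and z :: "'m \<Rightarrow> 'g \<Rightarrow> 'g \<Rightarrow> 'a"
  assumes pm: "pi0_module G Mv mu rho"
  shows "cm_Z2 G Mv act mu rho z \<longleftrightarrow>
    (\<forall>m \<in> carrier Mv. \<forall>h \<in> carrier G. \<forall>g \<in> carrier G.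
        z m h g = cM G z m - cG Mv z (mu m) h + cG Mv z h g)
    \<and> grp_Z2 G (\<lambda>g. rho (cls G Mv mu g)) (cG Mv z)
    \<and> (\<forall>n \<in> carrier Mv. \<forall>m \<in> carrier Mv.
        cM G z (n \<otimes>\<^bsub>Mv\<^esub> m) = cM G z n + cM G z m - cG Mv z (mu n) (mu m))
    \<and> (\<forall>m \<in> carrier Mv. \<forall>g \<in> carrier G.
        cM G z (act g m) = rho (cls G Mv mu g) (cM G z m)
          + cG Mv z (mu (act g m)) g - cG Mv z g (mu m))" (is "?L \<longleftrightarrow> ?R")
proof -
  let ?r = "\<lambda>g. rho (cls G Mv mu g)"
  have radd: "\<And>g a b. g \<in> carrier G \<Longrightarrow> ?r g (a + b) = ?r g a + ?r g b"
    using pm cls_carrier unfolding pi0_module_def by blast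
  have rminus: "\<And>g a. g \<in> carrier G \<Longrightarrow> ?r g (- a) = - ?r g a"
  proof -
    fix g a assume g: "g \<in> carrier G"
    have "?r g (- a) + ?r g a = ?r g 0" using radd[OF g, of "-a" a] by simp
    moreover have "?r g 0 = 0" using radd[OF g, of 0 0] by simp
    ultimately show "?r g (- a) = - ?r g a" by (simp add: eq_neg_iff_add_eq_0)
  qed
  have rdiff: "\<And>g a b. g \<in> carrier G \<Longrightarrow> ?r g (a - b) = ?r g a - ?r g b"
    using radd rminus by (metis diff_conv_add_uminus)
  have r1: "\<And>a. rho \<one>\<^bsub>pi0 G Mv mu\<^esub> a = a" using pm unfolding pi0_module_def by blast
  have rmu: "\<And>m a. m \<in> carrier Mv \<Longrightarrow> ?r (mu m) a = a" using r1 cls_mu by simp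
  have rone: "\<And>a. ?r \<one> a = a" using r1 cls_one by simp
  show ?thesis
  proof
    assume Z: "cm_Z2 G Mv act mu rho z"
    have dz: "\<And>p n k m h g. p \<in> carrier Mv \<Longrightarrow> n \<in> carrier Mv \<Longrightarrow> k \<in> carrier G \<Longrightarrow>
       m \<in> carrier Mv \<Longrightarrow> h \<in> carrier G \<Longrightarrow> g \<in> carrier G \<Longrightarrow> cm_d2 G Mv act mu rho z p n k m h g = 0"
      using Z unfolding cm_Z2_def by blast
    have zM: "z m \<one> x = cM G z m" if "m \<in> carrier Mv" "x \<in> carrier G" for m x
      using dz[of m "\<one>\<^bsub>Mv\<^esub>" \<one> "\<one>\<^bsub>Mv\<^esub>" \<one> x] that
      by (simp add: cm_d2_def cM_def rone act_one)
    have A: "z m h g = cM G z m - cG Mv z (mu m) h + cG Mv z h g"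
      if "m \<in> carrier Mv" "h \<in> carrier G" "g \<in> carrier G" for m h g
      using dz[of "\<one>\<^bsub>Mv\<^esub>" m \<one> "\<one>\<^bsub>Mv\<^esub>" h g] that zM[of m "h \<otimes> g"]
      by (simp add: cm_d2_def cG_def rone act_one algebra_simps)
    have B: "grp_Z2 G ?r (cG Mv z)"
      unfolding grp_Z2_def grp_d2_def
    proof (intro ballI)
      fix r q p assume "r \<in> carrier G" "q \<in> carrier G" "p \<in> carrier G"
      then show "cG Mv z r q - cG Mv z r (q \<otimes> p) + cG Mv z (r \<otimes> q) p - ?r r (cG Mv z q p) = 0"
        using dz[of "\<one>\<^bsub>Mv\<^esub>" "\<one>\<^bsub>Mv\<^esub>" r "\<one>\<^bsub>Mv\<^esub>" q p]
        by (simp add: cm_d2_def cG_def)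
    qed
    have cg1: "cG Mv z x \<one> = ?r x (cG Mv z \<one> \<one>)" if "x \<in> carrier G" for x
    proof -
      have "grp_d2 G ?r (cG Mv z) x \<one> \<one> = 0" using B that by (simp add: grp_Z2_def)
      then show ?thesis using that by (simp add: grp_d2_def)
    qed
    have C: "cM G z (n \<otimes>\<^bsub>Mv\<^esub> m) = cM G z n + cM G z m - cG Mv z (mu n) (mu m)"
      if "n \<in> carrier Mv" "m \<in> carrier Mv" for n m
      using dz[of n m \<one> "\<one>\<^bsub>Mv\<^esub>" \<one> \<one>] that A[of n "mu m" \<one>] cg1[of "mu m"] rmu[OF that(2)]
      by (simp add: cm_d2_def cM_def cG_def act_one rone algebra_simps)
    have D: "cM G z (act g m) = ?r g (cM G z m) + cG Mv z (mu (act g m)) g - cG Mv z g (mu m)"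
      if "m \<in> carrier Mv" "g \<in> carrier G" for m g
      using dz[of "\<one>\<^bsub>Mv\<^esub>" "\<one>\<^bsub>Mv\<^esub>" g m \<one> \<one>] that A[of "act g m" g \<one>] act_closed[OF that(2,1)]
      by (simp add: cm_d2_def cM_def cG_def algebra_simps)
    show "?R" using A B C D by blast
  next
    assume R: "?R"
    let ?c = "cG Mv z" and ?Z = "cM G z"
    have A: "\<And>m h g. m \<in> carrier Mv \<Longrightarrow> h \<in> carrier G \<Longrightarrow> g \<in> carrier G \<Longrightarrow>
        z m h g = ?Z m - ?c (mu m) h + ?c h g" using R by blast
    have Bc: "\<And>r q s. r \<in> carrier G \<Longrightarrow> q \<in> carrier G \<Longrightarrow> s \<in> carrier G \<Longrightarrow>
        ?c r q - ?c r (q \<otimes> s) + ?c (r \<otimes> q) s - ?r r (?c q s) = 0"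
      using R unfolding grp_Z2_def grp_d2_def by blast
    have C: "\<And>n m. n \<in> carrier Mv \<Longrightarrow> m \<in> carrier Mv \<Longrightarrow>
        ?Z (n \<otimes>\<^bsub>Mv\<^esub> m) = ?Z n + ?Z m - ?c (mu n) (mu m)" using R by blast
    have D: "\<And>m g. m \<in> carrier Mv \<Longrightarrow> g \<in> carrier G \<Longrightarrow>
        ?Z (act g m) = ?r g (?Z m) + ?c (mu (act g m)) g - ?c g (mu m)" using R by blast
    show "?L" unfolding cm_Z2_def
    proof (intro ballI)
      fix p n k m h g assume p: "p \<in> carrier Mv" and n: "n \<in> carrier Mv" and k: "k \<in> carrier G"
        and m: "m \<in> carrier Mv" and h: "h \<in> carrier G" and g: "g \<in> carrier G"
      have am: "act k m \<in> carrier Mv" using act_closed k m by blast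
      have xc: "mu (act k m) \<in> carrier G" using am by simp
      have g1: "mu (act k m) \<otimes> k = k \<otimes> mu m"
        using peiffer1[OF k m] k m by (simp add: G.m_assoc)
      have g2: "mu (act k m) \<otimes> (k \<otimes> h) = k \<otimes> (mu m \<otimes> h)"
        using g1 k m h xc by (metis G.m_assoc mu_closed)
      have e1: "z p (mu n \<otimes> k) (mu m \<otimes> h) = ?Z p - ?c (mu p) (mu n \<otimes> k) + ?c (mu n \<otimes> k) (mu m \<otimes> h)"
        using A p n k m h by simp
      have e2: "z (p \<otimes>\<^bsub>Mv\<^esub> n) k (h \<otimes> g) = ?Z (p \<otimes>\<^bsub>Mv\<^esub> n) - ?c (mu p \<otimes> mu n) k + ?c k (h \<otimes> g)"
        using A[of "p \<otimes>\<^bsub>Mv\<^esub> n" k "h \<otimes> g"] p n k h g by simp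
      have e3: "z (n \<otimes>\<^bsub>Mv\<^esub> act k m) (k \<otimes> h) g = ?Z (n \<otimes>\<^bsub>Mv\<^esub> act k m)
          - ?c (mu n \<otimes> mu (act k m)) (k \<otimes> h) + ?c (k \<otimes> h) g"
        using A[of "n \<otimes>\<^bsub>Mv\<^esub> act k m" "k \<otimes> h" g] n am k h g by simp
      have e4: "z m h g = ?Z m - ?c (mu m) h + ?c h g" using A m h g by simp
      have z2: "?Z (p \<otimes>\<^bsub>Mv\<^esub> n) = ?Z p + ?Z n - ?c (mu p) (mu n)" using C p n by simp
      have z3: "?Z (n \<otimes>\<^bsub>Mv\<^esub> act k m) = ?Z n + ?Z (act k m) - ?c (mu n) (mu (act k m))"
        using C n am by simp
      have z4: "?Z (act k m) = ?r k (?Z m) + ?c (mu (act k m)) k - ?c k (mu m)" using D m k by simp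
      let ?D1 = "?c (mu p) (mu n) - ?c (mu p) (mu n \<otimes> k) + ?c (mu p \<otimes> mu n) k - ?c (mu n) k"
      let ?D2 = "?c k h - ?c k (h \<otimes> g) + ?c (k \<otimes> h) g - ?r k (?c h g)"
      let ?D3 = "?c k (mu m) - ?c k (mu m \<otimes> h) + ?c (k \<otimes> mu m) h - ?r k (?c (mu m) h)"
      let ?D4 = "?c (mu n) k - ?c (mu n) (k \<otimes> (mu m \<otimes> h)) + ?c (mu n \<otimes> k) (mu m \<otimes> h) - ?c k (mu m \<otimes> h)"
      let ?D5 = "?c (mu n) (mu (act k m)) - ?c (mu n) (k \<otimes> (mu m \<otimes> h))
          + ?c (mu n \<otimes> mu (act k m)) (k \<otimes> h) - ?c (mu (act k m)) (k \<otimes> h)"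
      let ?D6 = "?c (mu (act k m)) k - ?c (mu (act k m)) (k \<otimes> h) + ?c (k \<otimes> mu m) h - ?c k h"
      have d1: "?D1 = 0" using Bc[of "mu p" "mu n" k] rmu[OF p] p n k by simp
      have d2: "?D2 = 0" using Bc[of k h g] k h g by simp
      have d3: "?D3 = 0" using Bc[of k "mu m" h] k m h by simp
      have d4: "?D4 = 0" using Bc[of "mu n" k "mu m \<otimes> h"] rmu[OF n] n k m h by simp
      have d5: "?D5 = 0" using Bc[of "mu n" "mu (act k m)" "k \<otimes> h"] rmu[OF n] n k xc h g2 by simp
      have d6: "?D6 = 0" using Bc[of "mu (act k m)" k h] rmu[OF am] k xc h g1 by simp
      have "cm_d2 G Mv act mu rho z p n k m h g = ?D1 + ?D2 - ?D3 + ?D4 - ?D5 + ?D6"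
        unfolding cm_d2_def e1 e2 e3 e4 z2 z3 z4 rdiff[OF k] radd[OF k] rmu[OF am]
        by (simp add: algebra_simps)
      then show "cm_d2 G Mv act mu rho z p n k m h g = 0" using d1 d2 d3 d4 d5 d6 by simp
    qed
  qed
qed

end

theorem proposition3p11:
  fixes G :: "('g, 'c) monoid_scheme" and Mv :: "('m, 'd) monoid_scheme"
    and act :: "'g \<Rightarrow> 'm \<Rightarrow> 'm" and mu :: "'m \<Rightarrow> 'g"
    and rho :: "'g set \<Rightarrow> 'a::ab_group_add \<Rightarrow> 'a"
    and z :: "'m \<Rightarrow> 'g \<Rightarrow> 'g \<Rightarrow> 'a"
  assumes "crossed_module G Mv act mu"
    and "pi0_module G Mv mu rho"
  shows "cm_Z2 G Mv act mu rho z \<longleftrightarrow>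
    (\<forall>m \<in> carrier Mv. \<forall>h \<in> carrier G. \<forall>g \<in> carrier G.
        z m h g = cM G z m - cG Mv z (mu m) h + cG Mv z h g)
    \<and> grp_Z2 G (\<lambda>g. rho (cls G Mv mu g)) (cG Mv z)
    \<and> (\<forall>n \<in> carrier Mv. \<forall>m \<in> carrier Mv.
        cM G z (n \<otimes>\<^bsub>Mv\<^esub> m) = cM G z n + cM G z m - cG Mv z (mu n) (mu m))
    \<and> (\<forall>m \<in> carrier Mv. \<forall>g \<in> carrier G.
        cM G z (act g m) = rho (cls G Mv mu g) (cM G z m)
          + cG Mv z (mu (act g m)) g - cG Mv z g (mu m))"
  using crossed_module.main[OF assms] .

end
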